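(* Let $q\ge 2$, $n\ge 1$, $\delta\ge 2$, and let $r$ be a prime power with $r>q$. Then there exists a subset $\mathcal A\subseteq J_q(n)$ with $$|\mathcal A|\ge\frac{\binom{n+q-1}{n}}{r^{\delta-2}(r-1)}$$ such that $d_L(\mathbf u,\mathbf v)\ge 2\delta$ for all distinct $\mathbf u,\mathbf v\in\mathcal A$.
   Context: $J_q(n)=\{(a_1,\dots,a_q)\in\mathbb Z_{\ge0}^q:\ \sum_{i=1}^q a_i=n\}$. The $L^1$-distance is $d_L(\mathbf u,\mathbf v)=\sum_{i=1}^q|u_i-v_i|$. *)

theory Defs
  imports Complex_Main "HOL-Number_Theory.Prime_Powers"
begin

definition J :: "nat \<Rightarrow> nat \<Rightarrow> nat list set" where
  "J q n = {a. length a = q \<and> sum_list a = n}"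

text \<open>L1 distance (both vectors assumed of the same length).\<close>
definition dL :: "nat list \<Rightarrow> nat list \<Rightarrow> nat" where
  "dL u v = (\<Sum>i<length u. nat \<bar>int (u ! i) - int (v ! i)\<bar>)"

end

theory Submission
  imports Defs "HOL-Algebra.Algebraic_Closure" "HOL-Number_Theory.Residues"
begin

lemma (in cring) binom1:
  assumes x: "x \<in> carrier R"
  shows "(x \<oplus> \<one>) [^] n = (\<Oplus>k\<in>{..n}. add_pow R (n choose k) (x [^] k))"
proof (induction n)
  case 0
  then show ?case using x by simp
next
  case (Suc n)
  let ?f = "\<lambda>k. add_pow R (n choose k) (x [^] k)"
  have fc: "?f \<in> UNIV \<rightarrow> carrier R" using x by auto
  have A: "(\<Oplus>k\<in>{..Suc n}. ?f k) = (\<Oplus>k\<in>{..n}. ?f k)"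
    using finsum_Suc[of ?f n] fc x by (simp add: binomial_eq_0)
  have B: "(\<Oplus>k\<in>{..Suc n}. ?f k) = (\<Oplus>k\<in>{..n}. ?f (Suc k)) \<oplus> \<one>"
    using finsum_Suc2[of ?f n] fc x by simp
  have "(x \<oplus> \<one>) [^] Suc n = (\<Oplus>k\<in>{..n}. ?f k) \<otimes> (x \<oplus> \<one>)"
    using Suc x by simp
  also have "\<dots> = (\<Oplus>k\<in>{..n}. ?f k) \<otimes> x \<oplus> (\<Oplus>k\<in>{..n}. ?f k)"
    using x fc by (simp add: r_distr finsum_closed)
  also have "(\<Oplus>k\<in>{..n}. ?f k) \<otimes> x = (\<Oplus>k\<in>{..n}. add_pow R (n choose k) (x [^] Suc k))"
    using x fc by (simp add: finsum_ldistr add_pow_ldistr add_pow_rdistr m_comm finsum_rdistr nat_pow_Suc2)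
  also have "(\<Oplus>k\<in>{..n}. ?f k) = (\<Oplus>k\<in>{..n}. ?f (Suc k)) \<oplus> \<one>"
    using A B by simp
  also have "(\<Oplus>k\<in>{..n}. add_pow R (n choose k) (x [^] Suc k)) \<oplus> ((\<Oplus>k\<in>{..n}. ?f (Suc k)) \<oplus> \<one>)
      = (\<Oplus>k\<in>{..n}. add_pow R (n choose k) (x [^] Suc k) \<oplus> ?f (Suc k)) \<oplus> \<one>"
    using x by (simp add: finsum_addf a_assoc finsum_closed)
  also have "(\<Oplus>k\<in>{..n}. add_pow R (n choose k) (x [^] Suc k) \<oplus> ?f (Suc k)) = (\<Oplus>k\<in>{..n}. add_pow R (Suc n choose Suc k) (x [^] Suc k))"
    using x by (intro finsum_cong) (auto simp: add.nat_pow_mult add.m_comm)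
  also have "(\<Oplus>k\<in>{..n}. add_pow R (Suc n choose Suc k) (x [^] Suc k)) \<oplus> \<one> = (\<Oplus>k\<in>{..Suc n}. add_pow R (Suc n choose k) (x [^] k))"
    using finsum_Suc2[of "\<lambda>k. add_pow R (Suc n choose k) (x [^] k)" n] x by simp
  finally show ?case .
qed

lemma (in ring) add_pow_char_zero:
  fixes p m :: nat
  assumes c: "add_pow R p \<one> = \<zero>" and y: "y \<in> carrier R"
  shows "add_pow R (p * m) y = \<zero>"
proof -
  have "add_pow R p y = add_pow R p \<one> \<otimes> y" using add_pow_ldistr[of "\<one>" y p] y by simp
  hence "add_pow R p y = \<zero>" using c y by simp
  thus ?thesis using y by (simp add: add.nat_pow_pow[symmetric])
qed

lemma (in cring) frob1:
  fixes p :: nat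
  assumes c: "add_pow R p \<one> = \<zero>" and p: "normalization_semidom_class.prime p" and x: "x \<in> carrier R"
  shows "(x \<oplus> \<one>) [^] p = x [^] p \<oplus> \<one>"
proof -
  have "p \<ge> 2" using p by (simp add: prime_ge_2_nat)
  then obtain m where m: "p = Suc (Suc m)" by (metis add_2_eq_Suc le_Suc_ex)
  let ?f = "\<lambda>k. add_pow R (p choose k) (x [^] k)"
  have fc: "?f \<in> UNIV \<rightarrow> carrier R" using x by auto
  have z: "?f (Suc i) = \<zero>" if "i \<le> m" for i
  proof -
    have "p dvd (p choose Suc i)" using that m p by (intro dvd_choose_prime) auto
    then obtain t where "p choose Suc i = p * t" by blast
    thus ?thesis using add_pow_char_zero[OF c] x by simp
  qed
  have "(x \<oplus> \<one>) [^] p = (\<Oplus>k\<in>{..Suc (Suc m)}. ?f k)" using binom1[OF x, of p] unfolding m .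
  also have "\<dots> = ?f (Suc (Suc m)) \<oplus> (\<Oplus>k\<in>{..Suc m}. ?f k)" by (rule finsum_Suc) (use fc in auto)
  also have "(\<Oplus>k\<in>{..Suc m}. ?f k) = (\<Oplus>k\<in>{..m}. ?f (Suc k)) \<oplus> ?f 0" by (rule finsum_Suc2) (use fc in auto)
  also have "(\<Oplus>k\<in>{..m}. ?f (Suc k)) = (\<Oplus>k\<in>{..m}. \<zero>)"
    by (intro finsum_cong) (use z in auto)
  also have "(\<Oplus>k\<in>{..m}. \<zero>) = \<zero>" by simp
  finally show ?thesis using x m by simp
qed

lemma (in field) frob:
  fixes p :: nat
  assumes c: "add_pow R p \<one> = \<zero>" and p: "normalization_semidom_class.prime p" and a: "a \<in> carrier R" and b: "b \<in> carrier R"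
  shows "(a \<oplus> b) [^] p = a [^] p \<oplus> b [^] p"
proof (cases "b = \<zero>")
  case True
  have "p \<noteq> 0" using p by auto
  then show ?thesis using a True by (simp add: nat_pow_zero)
next
  case False
  have ib: "inv b \<in> carrier R" and bi: "inv b \<otimes> b = \<one>" using False b field_Units by auto
  have e1: "a \<oplus> b = (a \<otimes> inv b \<oplus> \<one>) \<otimes> b"
  proof -
    have "(a \<otimes> inv b \<oplus> \<one>) \<otimes> b = a \<otimes> inv b \<otimes> b \<oplus> \<one> \<otimes> b"
      using a b ib by (rule_tac l_distr) auto
    also have "a \<otimes> inv b \<otimes> b = a" using a b ib bi by (simp add: m_assoc)
    finally show ?thesis using b by simp
  qed
  have "(a \<oplus> b) [^] p = (a \<otimes> inv b \<oplus> \<one>) [^] p \<otimes> b [^] p"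
    unfolding e1 using a b ib by (intro pow_mult_distrib) (auto simp: m_comm)
  also have "(a \<otimes> inv b \<oplus> \<one>) [^] p = (a \<otimes> inv b) [^] p \<oplus> \<one>" using frob1[OF c p] a ib by simp
  also have "(a \<otimes> inv b) [^] p = a [^] p \<otimes> inv b [^] p" using a ib by (intro pow_mult_distrib) (auto simp: m_comm)
  also have "(a [^] p \<otimes> inv b [^] p \<oplus> \<one>) \<otimes> b [^] p = a [^] p \<otimes> inv b [^] p \<otimes> b [^] p \<oplus> \<one> \<otimes> b [^] p"
    using a b ib by (intro l_distr) auto
  also have "a [^] p \<otimes> inv b [^] p \<otimes> b [^] p = a [^] p \<otimes> (inv b [^] p \<otimes> b [^] p)"
    using a b ib by (intro m_assoc) auto
  also have "inv b [^] p \<otimes> b [^] p = (inv b \<otimes> b) [^] p"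
    using a b ib by (intro pow_mult_distrib[symmetric]) (auto simp: m_comm)
  finally show ?thesis using bi a b by simp
qed

lemma (in field) frob_pow:
  fixes p :: nat
  assumes c: "add_pow R p \<one> = \<zero>" and p: "normalization_semidom_class.prime p" and a: "a \<in> carrier R" and b: "b \<in> carrier R"
  shows "(a \<oplus> b) [^] (p ^ k) = a [^] (p ^ k) \<oplus> b [^] (p ^ k)"
proof (induction k)
  case 0
  then show ?case using a b by simp
next
  case (Suc k)
  have pk: "p ^ Suc k = p ^ k * p" by simp
  have "(a \<oplus> b) [^] (p ^ Suc k) = ((a \<oplus> b) [^] (p ^ k)) [^] p"
    unfolding pk by (rule nat_pow_pow[symmetric]) (use a b in auto)
  also have "\<dots> = (a [^] (p ^ k)) [^] p \<oplus> (b [^] (p ^ k)) [^] p"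
    using Suc frob[OF c p] a b by simp
  also have "\<dots> = a [^] (p ^ Suc k) \<oplus> b [^] (p ^ Suc k)"
    unfolding pk using nat_pow_pow[of a "p^k" p, symmetric] nat_pow_pow[of b "p^k" p, symmetric] a b by (simp only:)
  finally show ?case .
qed

fun Tseq :: "('a, 'b) ring_scheme \<Rightarrow> 'a \<Rightarrow> 'a \<Rightarrow> nat \<Rightarrow> 'a" where
  "Tseq R x c 0 = \<zero>\<^bsub>R\<^esub>"
| "Tseq R x c (Suc n) = x \<otimes>\<^bsub>R\<^esub> Tseq R x c n \<oplus>\<^bsub>R\<^esub> c [^]\<^bsub>R\<^esub> n"

lemma (in cring) Tseq_closed: "x \<in> carrier R \<Longrightarrow> c \<in> carrier R \<Longrightarrow> Tseq R x c n \<in> carrier R"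
  by (induction n) auto

lemma (in cring) Tseq_eq:
  assumes x: "x \<in> carrier R" and c: "c \<in> carrier R"
  shows "(x \<ominus> c) \<otimes> Tseq R x c n = x [^] n \<ominus> c [^] n"
proof (induction n)
  case 0
  then show ?case using x c by (simp add: a_minus_def r_neg)
next
  case (Suc n)
  have T: "Tseq R x c n \<in> carrier R" using Tseq_closed x c by auto
  have cn: "c [^] n \<in> carrier R" "x [^] n \<in> carrier R" using x c by auto
  have "(x \<ominus> c) \<otimes> Tseq R x c (Suc n) = x \<otimes> ((x \<ominus> c) \<otimes> Tseq R x c n) \<oplus> (x \<ominus> c) \<otimes> c [^] n"
    unfolding Tseq.simps using x c T cn by algebra
  also have "\<dots> = x \<otimes> (x [^] n \<ominus> c [^] n) \<oplus> (x \<ominus> c) \<otimes> c [^] n" using Suc by simp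
  also have "\<dots> = x [^] Suc n \<ominus> c [^] Suc n"
    unfolding nat_pow_Suc2[OF x, of n] nat_pow_Suc2[OF c, of n] using x c cn by algebra
  finally show ?case .
qed

lemma (in cring) Tseq_diag:
  assumes a: "a \<in> carrier R"
  shows "Tseq R a a (Suc n) = add_pow R (Suc n) (a [^] n)"
proof (induction n)
  case 0
  then show ?case using a by simp
next
  case (Suc n)
  have "Tseq R a a (Suc (Suc n)) = a \<otimes> add_pow R (Suc n) (a [^] n) \<oplus> a [^] Suc n"
    using Suc by simp
  also have "a \<otimes> add_pow R (Suc n) (a [^] n) = add_pow R (Suc n) (a \<otimes> a [^] n)"
    by (rule add_pow_rdistr) (use a in auto)
  also have "a \<otimes> a [^] n = a [^] Suc n" using a by (simp add: m_comm)
  finally show ?case using a by simp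
qed

lemma hom_Tseq:
  assumes h: "ring_hom_ring R S h" and x: "x \<in> carrier R" and c: "c \<in> carrier R"
  shows "h (Tseq R x c n) = Tseq S (h x) (h c) n"
proof -
  interpret ring_hom_ring R S h by (rule h)
  show ?thesis
proof (induction n)
  case 0
  then show ?case by simp
next
  case (Suc n)
  have T: "Tseq R x c n \<in> carrier R"
    using x c by (induction n) auto
  show ?case using Suc x c T by (simp add: hom_nat_pow)
qed
qed

lemma (in field) GF_sub_subring:
  fixes p k :: nat
  assumes c: "add_pow R p \<one> = \<zero>" and p: "normalization_semidom_class.prime p" and k: "k \<ge> 1"
  shows "subring {x \<in> carrier R. x [^] (p^k) = x} R"
proof (rule subringI)
  let ?N = "p ^ k"
  have N0: "?N \<noteq> 0" using p by auto
  show "{x \<in> carrier R. x [^] ?N = x} \<subseteq> carrier R" by auto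
  show "\<one> \<in> {x \<in> carrier R. x [^] ?N = x}" by simp
  show "h1 \<otimes> h2 \<in> {x \<in> carrier R. x [^] ?N = x}" if "h1 \<in> {x \<in> carrier R. x [^] ?N = x}" "h2 \<in> {x \<in> carrier R. x [^] ?N = x}" for h1 h2
    using that by (auto simp: pow_mult_distrib m_comm)
  show "h1 \<oplus> h2 \<in> {x \<in> carrier R. x [^] ?N = x}" if "h1 \<in> {x \<in> carrier R. x [^] ?N = x}" "h2 \<in> {x \<in> carrier R. x [^] ?N = x}" for h1 h2
    using that frob_pow[OF c p, of h1 h2 k] by simp
  show "\<ominus> h \<in> {x \<in> carrier R. x [^] ?N = x}" if "h \<in> {x \<in> carrier R. x [^] ?N = x}" for h
  proof -
    have h: "h \<in> carrier R" "h [^] ?N = h" using that by auto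
    have "\<zero> = (h \<oplus> \<ominus> h) [^] ?N" using h N0 by (simp add: r_neg nat_pow_zero)
    also have "\<dots> = h \<oplus> (\<ominus> h) [^] ?N" using frob_pow[OF c p h(1), of "\<ominus> h" k] h by simp
    finally have "h \<oplus> (\<ominus> h) [^] ?N = \<zero>" by simp
    hence "(\<ominus> h) [^] ?N = \<ominus> h" using h by (metis a_inv_closed add.inv_equality add.m_comm nat_pow_closed)
    thus ?thesis using h by simp
  qed
qed

lemma (in field) GF_sub_card:
  fixes p k :: nat
  assumes c: "add_pow R p \<one> = \<zero>" and p: "normalization_semidom_class.prime p" and k: "k \<ge> 1"
    and spl: "splitted (X [^]\<^bsub>poly_ring R\<^esub> (p^k) \<ominus>\<^bsub>poly_ring R\<^esub> X)"
  shows "card {x \<in> carrier R. x [^] (p^k) = x} = p^k"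
proof -
  define N where "N = p ^ k"
  define S where "S = {x \<in> carrier R. x [^] N = x}"
  define P where "P = X [^]\<^bsub>poly_ring R\<^esub> N \<ominus>\<^bsub>poly_ring R\<^esub> X"
  have p2: "p \<ge> 2" using p by (simp add: prime_ge_2_nat)
  have Np: "N = p * p ^ (k - 1)" unfolding N_def using k by (metis Suc_diff_le diff_Suc_1 power_Suc)
  have N2: "N \<ge> 2"
  proof -
    have "1 \<le> p ^ (k - 1)" using p2 by simp
    hence "p * 1 \<le> p * p ^ (k - 1)" by (rule mult_le_mono2)
    thus ?thesis using Np p2 by linarith
  qed
  have charN: "add_pow R N y = \<zero>" if "y \<in> carrier R" for y
    using add_pow_char_zero[OF c that] Np by simp
  have sub: "subring (carrier R) R" by (rule carrier_is_subring)
  interpret UP: domain "poly_ring R" by (rule univ_poly_is_domain[OF sub])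
  have Xc: "X \<in> carrier (poly_ring R)" by (rule var_closed(1)[OF sub])
  have Pc: "P \<in> carrier (poly_ring R)" unfolding P_def using Xc by simp
  have XN: "X [^]\<^bsub>poly_ring R\<^esub> N = monom \<one> N" using unitary_monom_eq_var_pow[OF sub] by simp
  have mX: "\<ominus>\<^bsub>poly_ring R\<^esub> X = [\<ominus> \<one>, \<zero>]"
    using univ_poly_a_inv_def'[OF sub Xc] by (simp add: var_def)
  have Peq: "P = poly_add (monom \<one> N) [\<ominus> \<one>, \<zero>]"
    unfolding P_def a_minus_def XN mX using sub by (simp add: univ_poly_add)
  have degP: "degree P = N"
  proof -
    have h1: "polynomial (carrier R) (monom \<one> N)" using sub by (auto intro!: monom_is_polynomial)
    have h2: "polynomial (carrier R) [\<ominus> \<one>, \<zero>]" by (intro polynomialI) auto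
    have dm: "degree (monom \<one> N) = N" by (simp add: monom_def)
    have d: "degree (poly_add (monom \<one> N) [\<ominus> \<one>, \<zero>]) = max (degree (monom \<one> N)) (degree [\<ominus> \<one>, \<zero>])"
      by (rule poly_add_degree_eq[OF sub h1 h2]) (use dm N2 in simp)
    show ?thesis unfolding Peq d dm using N2 by (simp del: poly_add.simps)
  qed
  have Pne: "P \<noteq> []" using degP N2 by auto
  have evalP: "eval P a = a [^] N \<ominus> a" if a: "a \<in> carrier R" for a
  proof -
    interpret E: ring_hom_ring "poly_ring R" R "\<lambda>q. eval q a" by (rule eval_ring_hom[OF sub a])
    show ?thesis unfolding P_def using Xc a by (simp add: E.hom_nat_pow eval_var a_minus_def)
  qed
  have memS: "x \<in># roots P \<longleftrightarrow> x \<in> S" for x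
    unfolding roots_mem_iff_is_root[OF Pc] is_root_def S_def using evalP Pne
    by (auto simp: r_right_minus_eq)
  have cnt: "count (roots P) x \<le> 1" for x
  proof (rule ccontr)
    assume "\<not> count (roots P) x \<le> 1"
    hence am: "2 \<le> alg_mult P x" using alg_mult_eq_count_roots[OF Pc] by simp
    have x: "x \<in> carrier R" using am unfolding alg_mult_def by (auto split: if_splits)
    have xS: "x \<in> S" using memS am alg_mult_eq_count_roots[OF Pc] by (metis count_greater_zero_iff not_numeral_le_zero neq0_conv)
    hence xN: "x [^] N = x" unfolding S_def by simp
    define Y where "Y = [\<one>, \<ominus> x]"
    have "(Y [^]\<^bsub>poly_ring R\<^esub> (2::nat)) pdivides P" unfolding Y_def by (rule le_alg_mult_imp_pdivides[OF x Pc am])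
    then obtain h where hc: "h \<in> carrier (poly_ring R)" and Ph: "P = Y [^]\<^bsub>poly_ring R\<^esub> (2::nat) \<otimes>\<^bsub>poly_ring R\<^esub> h"
      unfolding pdivides_def factor_def by auto
    define C where "C = poly_of_const x"
    have Cc: "C \<in> carrier (poly_ring R)" 
      unfolding C_def poly_of_const_def using x by (auto simp: univ_poly_carrier[symmetric] polynomial_def)
    have Yeq: "Y = X \<ominus>\<^bsub>poly_ring R\<^esub> C"
      using x univ_poly_a_inv_def'[OF sub Cc] by (auto simp: Y_def C_def poly_of_const_def var_def a_minus_def univ_poly_add)
    have Yc: "Y \<in> carrier (poly_ring R)" unfolding Yeq using Xc Cc by simp
    have Yne: "Y \<noteq> \<zero>\<^bsub>poly_ring R\<^esub>" by (simp add: Y_def univ_poly_zero)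
    define T where "T = Tseq (poly_ring R) X C N"
    have Tc: "T \<in> carrier (poly_ring R)" unfolding T_def using UP.Tseq_closed Xc Cc by simp
    have TE: "Y \<otimes>\<^bsub>poly_ring R\<^esub> T = X [^]\<^bsub>poly_ring R\<^esub> N \<ominus>\<^bsub>poly_ring R\<^esub> C [^]\<^bsub>poly_ring R\<^esub> N"
      unfolding Yeq T_def by (rule UP.Tseq_eq[OF Xc Cc])
    have CN: "C [^]\<^bsub>poly_ring R\<^esub> N = C"
    proof -
      interpret H: ring_hom_ring "R \<lparr> carrier := carrier R \<rparr>" "poly_ring R" poly_of_const
        by (rule canonical_embedding_ring_hom[OF sub])
      have "poly_of_const (x [^]\<^bsub>R \<lparr> carrier := carrier R \<rparr>\<^esub> N) = C [^]\<^bsub>poly_ring R\<^esub> N"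
        unfolding C_def by (rule H.hom_nat_pow) (use x in simp)
      moreover have "x [^]\<^bsub>R \<lparr> carrier := carrier R \<rparr>\<^esub> N = x [^] N" by (simp add: nat_pow_def)
      ultimately show ?thesis using xN C_def by simp
    qed
    have fac: "P = Y \<otimes>\<^bsub>poly_ring R\<^esub> (T \<ominus>\<^bsub>poly_ring R\<^esub> \<one>\<^bsub>poly_ring R\<^esub>)"
    proof -
      have XNc: "X [^]\<^bsub>poly_ring R\<^esub> N \<in> carrier (poly_ring R)" using Xc by simp
      have "P = (X [^]\<^bsub>poly_ring R\<^esub> N \<ominus>\<^bsub>poly_ring R\<^esub> C [^]\<^bsub>poly_ring R\<^esub> N) \<ominus>\<^bsub>poly_ring R\<^esub> (X \<ominus>\<^bsub>poly_ring R\<^esub> C)"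
        unfolding P_def CN using Xc Cc XNc by algebra
      also have "\<dots> = Y \<otimes>\<^bsub>poly_ring R\<^esub> T \<ominus>\<^bsub>poly_ring R\<^esub> Y" unfolding TE unfolding Yeq by (rule refl)
      also have "\<dots> = Y \<otimes>\<^bsub>poly_ring R\<^esub> (T \<ominus>\<^bsub>poly_ring R\<^esub> \<one>\<^bsub>poly_ring R\<^esub>)"
        using Yc Tc by algebra
      finally show ?thesis .
    qed
    have "Y \<otimes>\<^bsub>poly_ring R\<^esub> (T \<ominus>\<^bsub>poly_ring R\<^esub> \<one>\<^bsub>poly_ring R\<^esub>) = Y \<otimes>\<^bsub>poly_ring R\<^esub> (Y \<otimes>\<^bsub>poly_ring R\<^esub> h)"
      using fac Ph Yc hc by (simp add: UP.m_assoc numeral_2_eq_2)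
    hence G: "T \<ominus>\<^bsub>poly_ring R\<^esub> \<one>\<^bsub>poly_ring R\<^esub> = Y \<otimes>\<^bsub>poly_ring R\<^esub> h"
      using UP.m_lcancel[OF Yne Yc] Tc hc Yc by simp
    interpret E: ring_hom_ring "poly_ring R" R "\<lambda>q. eval q x" by (rule eval_ring_hom[OF sub x])
    have eY: "eval Y x = \<zero>" using x by (simp add: Y_def r_neg)
    have eC: "eval C x = x" using x by (simp add: C_def poly_of_const_def)
    have eT: "eval T x = \<zero>"
    proof -
      have "eval T x = Tseq R x x N" unfolding T_def
        using hom_Tseq[OF E.is_ring_hom_ring Xc Cc] eval_var[OF x] eC by simp
      also have "\<dots> = Tseq R x x (Suc (N - 1))" using N2 by (simp add: Suc_diff_le)
      also have "\<dots> = add_pow R (Suc (N - 1)) (x [^] (N - 1))" by (rule Tseq_diag[OF x])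
      also have "\<dots> = \<zero>" using charN x N2 by (simp add: Suc_diff_le)
      finally show ?thesis .
    qed
    have "eval (T \<ominus>\<^bsub>poly_ring R\<^esub> \<one>\<^bsub>poly_ring R\<^esub>) x = \<ominus> \<one>"
      using Tc eT by (simp add: a_minus_def)
    moreover have "eval (Y \<otimes>\<^bsub>poly_ring R\<^esub> h) x = \<zero>" using Yc hc eY E.hom_closed x by simp
    ultimately have "\<zero> = \<ominus> \<one>" using G by simp
    hence "\<ominus> \<zero> = \<one>" by simp
    thus False by simp
  qed
  have fin: "finite S" unfolding S_def[symmetric] using memS
    by (metis finite_set_mset subsetI rev_finite_subset)
  have "roots P = mset_set S"
  proof (rule multiset_eqI)
    fix x show "count (roots P) x = count (mset_set S) x"
    proof (cases "x \<in> S")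
      case True
      hence "x \<in># roots P" using memS by simp
      hence "count (roots P) x > 0" by simp
      hence "count (roots P) x = 1" using cnt[of x] by linarith
      thus ?thesis using True fin by simp
    next
      case False
      hence "x \<notin># roots P" using memS by simp
      hence "count (roots P) x = 0" by (simp add: count_eq_zero_iff)
      thus ?thesis using False by simp
    qed
  qed
  hence "size (roots P) = card S" by simp
  moreover have "size (roots P) = N" using spl unfolding P_def[symmetric] N_def[symmetric] splitted_def degP .
  ultimately show ?thesis unfolding S_def N_def by simp
qed

lemma (in ring_hom_ring) hom_add_pow:
  fixes n :: nat
  assumes x: "x \<in> carrier R"
  shows "h (add_pow R n x) = add_pow S n (h x)"
proof (induction n)
  case 0
  then show ?case by simp
next
  case (Suc n)
  have c: "add_pow R n x \<in> carrier R" using x by simp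
  show ?case using Suc c x by simp
qed

lemma res_add_pow_one:
  fixes p :: nat
  assumes "normalization_semidom_class.prime p"
  shows "add_pow (residue_ring (int p)) n \<one>\<^bsub>residue_ring (int p)\<^esub> = int n mod int p"
proof -
  define R where "R = residue_ring (int p)"
  interpret residues_prime p R by unfold_locales (simp_all add: R_def assms)
  have "add_pow R n \<one>\<^bsub>R\<^esub> = int n mod int p"
  proof (induction n)
    case 0
    then show ?case by (simp add: res_zero_eq)
  next
    case (Suc n)
    have "add_pow R (Suc n) \<one>\<^bsub>R\<^esub> = (int n mod int p) \<oplus>\<^bsub>R\<^esub> \<one>\<^bsub>R\<^esub>" using Suc by simp
    also have "\<dots> = (int n mod int p + 1) mod int p" by (simp add: res_add_eq res_one_eq)
    also have "\<dots> = int (Suc n) mod int p" by (metis mod_add_left_eq of_nat_Suc add.commute)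
    finally show ?case .
  qed
  thus ?thesis unfolding R_def .
qed

lemma GF_exists:
  fixes p k :: nat
  assumes p: "normalization_semidom_class.prime p" and k: "k \<ge> 1"
  shows "\<exists>(L :: ((int list \<times> nat) multiset \<Rightarrow> int) ring) S. field L \<and> subring S L \<and> card S = p ^ k"
proof -
  define Z where "Z = residue_ring (int p)"
  interpret Zp: residues_prime p Z by unfold_locales (simp_all add: Z_def p)
  obtain L :: "((int list \<times> nat) multiset \<Rightarrow> int) ring"
    where cl: "algebraic_closure L (Zp.indexed_const ` (carrier Z))"
      and h: "Zp.indexed_const \<in> ring_hom Z L"
    using Zp.exists_closure by blast
  define K :: "((int list \<times> nat) multiset \<Rightarrow> int) set" where "K = Zp.indexed_const ` (carrier Z)"
  interpret L: algebraic_closure L K using cl unfolding K_def .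
  have fL: "field L" by (rule L.field_axioms)
  have subK: "subring K L" using L.subfield_axioms by (rule subfieldE(1))
  have c: "add_pow L p \<one>\<^bsub>L\<^esub> = \<zero>\<^bsub>L\<^esub>"
  proof -
    have "add_pow Z p \<one>\<^bsub>Z\<^esub> = \<zero>\<^bsub>Z\<^esub>"
      using res_add_pow_one[OF p, of p] unfolding Z_def[symmetric] by (simp add: Zp.res_zero_eq)
    hence "Zp.indexed_const (add_pow Z p \<one>\<^bsub>Z\<^esub>) = \<zero>\<^bsub>L\<^esub>"
      using ring_hom_zero[OF h Zp.ring_axioms L.ring_axioms] by simp
    moreover have "Zp.indexed_const (add_pow Z p \<one>\<^bsub>Z\<^esub>) = add_pow L p \<one>\<^bsub>L\<^esub>"
      using ring_hom_ring.hom_add_pow[OF ring_hom_ringI2[OF Zp.ring_axioms L.ring_axioms h], of "\<one>\<^bsub>Z\<^esub>" p] ring_hom_one[OF h] by simp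
    ultimately show ?thesis by simp
  qed
  define N where "N = p ^ k"
  define P where "P = X\<^bsub>L\<^esub> [^]\<^bsub>poly_ring L\<^esub> N \<ominus>\<^bsub>poly_ring L\<^esub> X\<^bsub>L\<^esub>"
  define U where "U = K [X]\<^bsub>L\<^esub>"
  interpret U: domain U unfolding U_def by (rule L.univ_poly_is_domain[OF subK])
  have XU: "X\<^bsub>L\<^esub> \<in> carrier U" unfolding U_def by (rule L.var_closed(1)[OF subK])
  have XL: "X\<^bsub>L\<^esub> \<in> carrier (poly_ring L)" by (rule L.var_closed(1)[OF L.carrier_is_subring])
  have pw: "X\<^bsub>L\<^esub> [^]\<^bsub>U\<^esub> N = X\<^bsub>L\<^esub> [^]\<^bsub>poly_ring L\<^esub> N"
    unfolding U_def by (simp add: nat_pow_def univ_poly_one univ_poly_mult)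
  have mi: "\<ominus>\<^bsub>U\<^esub> X\<^bsub>L\<^esub> = \<ominus>\<^bsub>poly_ring L\<^esub> X\<^bsub>L\<^esub>"
    using L.univ_poly_a_inv_def'[OF subK XU[unfolded U_def]] L.univ_poly_a_inv_def'[OF L.carrier_is_subring XL]
    unfolding U_def by simp
  have PU: "P = X\<^bsub>L\<^esub> [^]\<^bsub>U\<^esub> N \<ominus>\<^bsub>U\<^esub> X\<^bsub>L\<^esub>"
    unfolding P_def a_minus_def pw mi unfolding U_def by (simp add: univ_poly_add)
  have Pc: "P \<in> carrier (K [X]\<^bsub>L\<^esub>)" using XU unfolding PU U_def[symmetric] by simp
  have spl: "L.splitted P" by (rule L.roots_over_subfield[OF Pc])
  have "card {x \<in> carrier L. x [^]\<^bsub>L\<^esub> (p^k) = x} = p ^ k"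
    by (rule L.GF_sub_card[OF c p k]) (use spl in \<open>simp add: P_def N_def\<close>)
  moreover have "subring {x \<in> carrier L. x [^]\<^bsub>L\<^esub> (p^k) = x} L"
    by (rule L.GF_sub_subring[OF c p k])
  ultimately show ?thesis using fL by blast
qed

lemma pigeon:
  assumes fA: "finite A" and fB: "finite B" and ne: "B \<noteq> {}" and im: "f ` A \<subseteq> B"
  shows "\<exists>b\<in>B. card A \<le> card B * card {a\<in>A. f a = b}"
proof (rule ccontr)
  assume "\<not> ?thesis"
  hence lt: "\<And>b. b \<in> B \<Longrightarrow> card B * card {a\<in>A. f a = b} < card A" by (simp add: not_le)
  have eqA: "A = (\<Union>b\<in>B. {a\<in>A. f a = b})" using im by auto
  have "card A = (\<Sum>b\<in>B. card {a\<in>A. f a = b})"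
    by (subst eqA, rule card_UN_disjoint) (use fA fB in auto)
  hence "card B * card A = (\<Sum>b\<in>B. card B * card {a\<in>A. f a = b})" by (simp add: sum_distrib_left)
  also have "\<dots> < (\<Sum>b\<in>B. card A)" using lt fB ne by (intro sum_strict_mono) auto
  also have "\<dots> = card B * card A" by simp
  finally show False by simp
qed

context domain
begin

lemma monic_mult:
  assumes S: "subring S R"
    and p: "p \<in> carrier (S[X])" "p \<noteq> []" "lead_coeff p = \<one>"
    and q: "q \<in> carrier (S[X])" "q \<noteq> []" "lead_coeff q = \<one>"
  shows "p \<otimes>\<^bsub>S[X]\<^esub> q \<noteq> [] \<and> lead_coeff (p \<otimes>\<^bsub>S[X]\<^esub> q) = \<one> \<and> degree (p \<otimes>\<^bsub>S[X]\<^esub> q) = degree p + degree q"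
proof -
  have pp: "polynomial S p" "polynomial S q" using p q by (simp_all add: univ_poly_carrier)
  have "poly_mult p q \<noteq> []" using poly_mult_integral[OF S pp] p q by auto
  moreover have "lead_coeff (poly_mult p q) = \<one>" using poly_mult_lead_coeff[OF S pp p(2) q(2)] p q by simp
  moreover have "degree (poly_mult p q) = degree p + degree q" using poly_mult_degree_eq[OF S pp] p q by simp
  ultimately show ?thesis by (simp add: univ_poly_mult)
qed

lemma monic_pow:
  assumes S: "subring S R"
    and p: "p \<in> carrier (S[X])" "p \<noteq> []" "lead_coeff p = \<one>"
  shows "p [^]\<^bsub>S[X]\<^esub> (k::nat) \<noteq> [] \<and> lead_coeff (p [^]\<^bsub>S[X]\<^esub> k) = \<one> \<and> degree (p [^]\<^bsub>S[X]\<^esub> k) = k * degree p"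
proof (induction k)
  case 0
  then show ?case by (simp add: univ_poly_one)
next
  case (Suc k)
  interpret U: domain "S[X]" by (rule univ_poly_is_domain[OF S])
  have c: "p [^]\<^bsub>S[X]\<^esub> k \<in> carrier (S[X])" using p by simp
  have "p [^]\<^bsub>S[X]\<^esub> Suc k = p [^]\<^bsub>S[X]\<^esub> k \<otimes>\<^bsub>S[X]\<^esub> p" by simp
  then show ?case using monic_mult[OF S c _ _ p] Suc by simp
qed

lemma monic_finprod:
  assumes S: "subring S R" and fin: "finite A"
    and f: "\<And>i. i \<in> A \<Longrightarrow> f i \<in> carrier (S[X]) \<and> f i \<noteq> [] \<and> lead_coeff (f i) = \<one>"
  shows "finprod (S[X]) f A \<noteq> [] \<and> lead_coeff (finprod (S[X]) f A) = \<one> \<and> degree (finprod (S[X]) f A) = (\<Sum>i\<in>A. degree (f i))"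
  using fin f
proof (induction A rule: finite_induct)
  case empty
  interpret U: domain "S[X]" by (rule univ_poly_is_domain[OF S])
  show ?case by (simp add: univ_poly_one)
next
  case (insert a A)
  interpret U: domain "S[X]" by (rule univ_poly_is_domain[OF S])
  have fc: "f \<in> A \<rightarrow> carrier (S[X])" using insert by auto
  have c: "finprod (S[X]) f A \<in> carrier (S[X])" using fc by simp
  have "finprod (S[X]) f (insert a A) = f a \<otimes>\<^bsub>S[X]\<^esub> finprod (S[X]) f A"
    using insert fc by simp
  then show ?case using monic_mult[OF S _ _ _ c] insert by simp
qed

lemma eval_finprod_zero:
  assumes S: "subring S R" and fin: "finite A" and z: "z \<in> carrier R"
    and f: "\<And>i. i \<in> A \<Longrightarrow> f i \<in> carrier (S[X])"
    and i: "i \<in> A" and fi: "eval (f i) z = \<zero>"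
  shows "eval (finprod (S[X]) f A) z = \<zero>"
proof -
  interpret U: domain "S[X]" by (rule univ_poly_is_domain[OF S])
  interpret E: ring_hom_ring "S[X]" R "\<lambda>q. eval q z" by (rule eval_ring_hom[OF S z])
  have "A = insert i (A - {i})" using i by auto
  hence "finprod (S[X]) f A = f i \<otimes>\<^bsub>S[X]\<^esub> finprod (S[X]) f (A - {i})"
    using fin f by (metis U.finprod_insert Diff_iff Pi_I finite_Diff insertI1)
  moreover have "finprod (S[X]) f (A - {i}) \<in> carrier (S[X])" using f by (intro U.finprod_closed) auto
  ultimately show ?thesis using fi f i by simp
qed

lemma eval_finprod_nonzero:
  assumes S: "subring S R" and fin: "finite A" and z: "z \<in> carrier R"
    and f: "\<And>i. i \<in> A \<Longrightarrow> f i \<in> carrier (S[X]) \<and> eval (f i) z \<noteq> \<zero>"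
  shows "eval (finprod (S[X]) f A) z \<noteq> \<zero>"
  using fin f
proof (induction A rule: finite_induct)
  case empty
  interpret U: domain "S[X]" by (rule univ_poly_is_domain[OF S])
  show ?case by (simp add: univ_poly_one)
next
  case (insert a A)
  interpret U: domain "S[X]" by (rule univ_poly_is_domain[OF S])
  interpret E: ring_hom_ring "S[X]" R "\<lambda>q. eval q z" by (rule eval_ring_hom[OF S z])
  have fc: "f \<in> A \<rightarrow> carrier (S[X])" using insert by auto
  have c: "finprod (S[X]) f A \<in> carrier (S[X])" using fc by simp
  have "finprod (S[X]) f (insert a A) = f a \<otimes>\<^bsub>S[X]\<^esub> finprod (S[X]) f A"
    using insert fc by simp
  moreover have e1: "eval (f a) z \<in> carrier R" "eval (finprod (S[X]) f A) z \<in> carrier R"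
    using insert c by (auto intro: E.hom_closed)
  moreover have "eval (f a) z \<noteq> \<zero>" "eval (finprod (S[X]) f A) z \<noteq> \<zero>" using insert by auto
  ultimately show ?case using insert c integral[OF _ e1] by auto
qed

end

lemma (in domain) pow_nonzero:
  assumes a: "a \<in> carrier R" "a \<noteq> \<zero>" shows "a [^] (k::nat) \<noteq> \<zero>"
proof (induction k)
  case 0 then show ?case by simp
next
  case (Suc k)
  then show ?case using a integral[of "a [^] k" a] by auto
qed

lemma (in ring) coeff_in_sub:
  assumes "set p \<subseteq> S" "\<zero> \<in> S" shows "coeff p i \<in> S"
  using assms by (induction p) auto

locale codesetup = domain R for R (structure) +
  fixes S :: "'a set" and \<alpha> :: "nat \<Rightarrow> 'a" and q :: nat
  assumes S: "subring S R"
    and \<alpha>S: "\<And>i. i < q \<Longrightarrow> \<alpha> i \<in> S"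
    and \<alpha>0: "\<And>i. i < q \<Longrightarrow> \<alpha> i \<noteq> \<zero>"
    and \<alpha>inj: "inj_on \<alpha> {..<q}"
begin

definition Y :: "nat \<Rightarrow> 'a list" where "Y i = [\<one>, \<ominus> \<alpha> i]"
definition F :: "(nat \<Rightarrow> nat) \<Rightarrow> 'a list" where
  "F e = finprod (S[X]) (\<lambda>i. Y i [^]\<^bsub>S[X]\<^esub> e i) {..<q}"

lemma U_domain: "domain (S[X])" by (rule univ_poly_is_domain[OF S])

lemma \<alpha>R: "i < q \<Longrightarrow> \<alpha> i \<in> carrier R" using \<alpha>S subringE(1)[OF S] by auto

lemma Yc: "i < q \<Longrightarrow> Y i \<in> carrier (S[X])"
  unfolding Y_def univ_poly_carrier[symmetric] polynomial_def
  using \<alpha>S subringE(3,5)[OF S] by auto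

lemma Y_monic: "i < q \<Longrightarrow> Y i \<noteq> [] \<and> lead_coeff (Y i) = \<one> \<and> degree (Y i) = 1"
  by (simp add: Y_def)

lemma eval_Y: "i < q \<Longrightarrow> z \<in> carrier R \<Longrightarrow> eval (Y i) z = z \<ominus> \<alpha> i"
  using \<alpha>R by (simp add: Y_def a_minus_def)

lemma Fc: "F e \<in> carrier (S[X])"
proof -
  interpret U: domain "S[X]" by (rule U_domain)
  show ?thesis unfolding F_def using Yc by (intro U.finprod_closed) auto
qed

lemma F_monic: "F e \<noteq> [] \<and> lead_coeff (F e) = \<one> \<and> degree (F e) = (\<Sum>i<q. e i)"
proof -
  interpret U: domain "S[X]" by (rule U_domain)
  have "F e \<noteq> [] \<and> lead_coeff (F e) = \<one> \<and> degree (F e) = (\<Sum>i<q. degree (Y i [^]\<^bsub>S[X]\<^esub> e i))"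
    unfolding F_def
  proof (rule monic_finprod[OF S])
    fix i assume i: "i \<in> {..<q}"
    show "Y i [^]\<^bsub>S[X]\<^esub> e i \<in> carrier (S[X]) \<and> Y i [^]\<^bsub>S[X]\<^esub> e i \<noteq> [] \<and> lead_coeff (Y i [^]\<^bsub>S[X]\<^esub> e i) = \<one>"
      using monic_pow[OF S Yc] Yc Y_monic i by auto
  qed simp
  moreover have "degree (Y i [^]\<^bsub>S[X]\<^esub> e i) = e i" if "i \<in> {..<q}" for i
    using monic_pow[OF S Yc] Y_monic that by auto
  ultimately show ?thesis by simp
qed

lemma F_add: "F (\<lambda>i. a i + b i) = F a \<otimes>\<^bsub>S[X]\<^esub> F b"
proof -
  interpret U: domain "S[X]" by (rule U_domain)
  have "F (\<lambda>i. a i + b i) = finprod (S[X]) (\<lambda>i. Y i [^]\<^bsub>S[X]\<^esub> a i \<otimes>\<^bsub>S[X]\<^esub> Y i [^]\<^bsub>S[X]\<^esub> b i) {..<q}"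
    unfolding F_def using Yc by (intro U.finprod_cong') (auto simp: U.nat_pow_mult)
  also have "\<dots> = F a \<otimes>\<^bsub>S[X]\<^esub> F b" unfolding F_def using Yc by (intro U.finprod_multf) auto
  finally show ?thesis .
qed

lemma const_F: "const_term (F e) \<noteq> \<zero>"
proof -
  have "eval (F e) \<zero> \<noteq> \<zero>" unfolding F_def
  proof (rule eval_finprod_nonzero[OF S])
    fix i assume i: "i \<in> {..<q}"
    interpret E: ring_hom_ring "S[X]" R "\<lambda>p. eval p \<zero>" by (rule eval_ring_hom[OF S zero_closed])
    have "eval (Y i [^]\<^bsub>S[X]\<^esub> e i) \<zero> = (\<zero> \<ominus> \<alpha> i) [^] e i"
      using E.hom_nat_pow[OF Yc] eval_Y i by simp
    moreover have "\<zero> \<ominus> \<alpha> i \<noteq> \<zero>" using \<alpha>R \<alpha>0 i by (simp add: a_minus_def)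
    ultimately show "Y i [^]\<^bsub>S[X]\<^esub> e i \<in> carrier (S[X]) \<and> eval (Y i [^]\<^bsub>S[X]\<^esub> e i) \<zero> \<noteq> \<zero>"
      using pow_nonzero \<alpha>R i Yc by (auto simp: a_minus_def)
  qed auto
  thus ?thesis by (simp add: const_term_def)
qed

lemma F_root:
  assumes i: "i < q" and ai: "a i > 0" and bi: "b i = 0"
  shows "F a \<noteq> F b"
proof
  assume eq: "F a = F b"
  have z: "\<alpha> i \<in> carrier R" using \<alpha>R i .
  interpret E: ring_hom_ring "S[X]" R "\<lambda>p. eval p (\<alpha> i)" by (rule eval_ring_hom[OF S z])
  have "eval (F a) (\<alpha> i) = \<zero>" unfolding F_def
  proof (rule eval_finprod_zero[OF S _ z _ _])
    show "eval (Y i [^]\<^bsub>S[X]\<^esub> a i) (\<alpha> i) = \<zero>"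
    proof -
      have "eval (Y i [^]\<^bsub>S[X]\<^esub> a i) (\<alpha> i) = (\<alpha> i \<ominus> \<alpha> i) [^] a i"
        using E.hom_nat_pow[OF Yc[OF i]] eval_Y[OF i z] by simp
      also have "\<alpha> i \<ominus> \<alpha> i = \<zero>" using z by (simp add: a_minus_def r_neg)
      also have "\<zero> [^] a i = \<zero>" using ai by (simp add: nat_pow_zero)
      finally show ?thesis .
    qed
  qed (use i Yc in auto)
  moreover have "eval (F b) (\<alpha> i) \<noteq> \<zero>" unfolding F_def
  proof (rule eval_finprod_nonzero[OF S _ z])
    fix j assume j: "j \<in> {..<q}"
    have "eval (Y j [^]\<^bsub>S[X]\<^esub> b j) (\<alpha> i) = (\<alpha> i \<ominus> \<alpha> j) [^] b j"
      using E.hom_nat_pow[OF Yc] eval_Y z j by simp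
    moreover have "(\<alpha> i \<ominus> \<alpha> j) [^] b j \<noteq> \<zero>"
    proof (cases "j = i")
      case True then show ?thesis using bi by simp
    next
      case False
      hence "\<alpha> i \<noteq> \<alpha> j" using \<alpha>inj i j by (auto dest: inj_onD)
      hence "\<alpha> i \<ominus> \<alpha> j \<noteq> \<zero>" using z \<alpha>R j by simp
      then show ?thesis using pow_nonzero z \<alpha>R j by simp
    qed
    ultimately show "Y j [^]\<^bsub>S[X]\<^esub> b j \<in> carrier (S[X]) \<and> eval (Y j [^]\<^bsub>S[X]\<^esub> b j) (\<alpha> i) \<noteq> \<zero>"
      using Yc j by auto
  qed auto
  ultimately show False using eq by simp
qed

lemma coeff_minus:
  assumes p: "p \<in> carrier (S[X])" and r: "r \<in> carrier (S[X])"
  shows "coeff (p \<ominus>\<^bsub>S[X]\<^esub> r) i = coeff p i \<ominus> coeff r i"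
proof -
  have sp: "set p \<subseteq> carrier R" "set r \<subseteq> carrier R"
    using p r polynomial_in_carrier[OF S] by (auto simp: univ_poly_carrier[symmetric])
  have m: "map (\<lambda>a. \<ominus> a) r = map (\<lambda>b. (\<ominus> \<one>) \<otimes> b) r"
    using sp by (intro map_cong) (auto simp: l_minus)
  have "p \<ominus>\<^bsub>S[X]\<^esub> r = poly_add p (map (\<lambda>a. \<ominus> a) r)"
    unfolding a_minus_def univ_poly_a_inv_def'[OF S r] by (simp add: univ_poly_add)
  moreover have "coeff (poly_add p (map (\<lambda>a. \<ominus> a) r)) = (\<lambda>i. coeff p i \<oplus> coeff (map (\<lambda>a. \<ominus> a) r) i)"
    by (rule poly_add_coeff) (use sp in auto)
  moreover have "coeff (map (\<lambda>a. \<ominus> a) r) = (\<lambda>i. (\<ominus> \<one>) \<otimes> coeff r i)"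
    unfolding m by (rule scalar_coeff) simp
  ultimately have "coeff (p \<ominus>\<^bsub>S[X]\<^esub> r) i = coeff p i \<oplus> (\<ominus> \<one>) \<otimes> coeff r i" by simp
  also have "\<dots> = coeff p i \<ominus> coeff r i"
    using sp by (simp add: a_minus_def l_minus)
  finally show ?thesis .
qed

lemma const_minus:
  assumes p: "p \<in> carrier (S[X])" and r: "r \<in> carrier (S[X])"
  shows "const_term (p \<ominus>\<^bsub>S[X]\<^esub> r) = const_term p \<ominus> const_term r"
proof -
  interpret U: domain "S[X]" by (rule U_domain)
  show ?thesis unfolding a_minus_def
    using const_term_simprules_shell(3,4)[OF S] p r by simp
qed

end

context codesetup
begin

lemma dist_main:
  assumes u: "u \<in> J q n" and v: "v \<in> J q n" and uv: "u \<noteq> v" and d: "\<delta> \<ge> 2"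
    and co: "\<And>j. j \<in> {1..<\<delta>-1} \<Longrightarrow> coeff (F (\<lambda>i. u!i)) (n - j) = coeff (F (\<lambda>i. v!i)) (n - j)"
    and ct: "const_term (F (\<lambda>i. u!i)) = const_term (F (\<lambda>i. v!i))"
  shows "2 * \<delta> \<le> dL u v"
proof (rule ccontr)
  assume contra: "\<not> 2 * \<delta> \<le> dL u v"
  interpret U: domain "S[X]" by (rule U_domain)
  have lu: "length u = q" "sum_list u = n" and lv: "length v = q" "sum_list v = n"
    using u v by (auto simp: J_def)
  define m where "m i = min (u!i) (v!i)" for i
  define x where "x i = u!i - m i" for i
  define y where "y i = v!i - m i" for i
  have ux: "(\<lambda>i. u!i) = (\<lambda>i. m i + x i)" by (auto simp: x_def m_def)
  have vy: "(\<lambda>i. v!i) = (\<lambda>i. m i + y i)" by (auto simp: y_def m_def)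
  define Fu where "Fu = F (\<lambda>i. u!i)"
  define Fv where "Fv = F (\<lambda>i. v!i)"
  define G where "G = F m"
  have Fu_eq: "Fu = G \<otimes>\<^bsub>S[X]\<^esub> F x" unfolding Fu_def G_def ux by (rule F_add)
  have Fv_eq: "Fv = G \<otimes>\<^bsub>S[X]\<^esub> F y" unfolding Fv_def G_def vy by (rule F_add)
  have su: "(\<Sum>i<q. m i) + (\<Sum>i<q. x i) = n"
    using lu by (simp add: sum_list_sum_nth ux sum.distrib[symmetric] atLeast0LessThan)
  have sv: "(\<Sum>i<q. m i) + (\<Sum>i<q. y i) = n"
    using lv by (simp add: sum_list_sum_nth vy sum.distrib[symmetric] atLeast0LessThan)
  define w where "w = (\<Sum>i<q. x i)"
  have wy: "(\<Sum>i<q. y i) = w" using su sv w_def by simp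
  have dLw: "dL u v = 2 * w"
  proof -
    have "dL u v = (\<Sum>i<q. x i + y i)"
      unfolding dL_def lu(1) by (intro sum.cong) (auto simp: x_def y_def m_def)
    also have "\<dots> = 2 * w" using wy w_def by (simp add: sum.distrib)
    finally show ?thesis .
  qed
  have wd: "w + 1 \<le> \<delta>" using contra dLw by simp
  have Gc: "G \<in> carrier (S[X])" unfolding G_def by (rule Fc)
  have Fxc: "F x \<in> carrier (S[X])" "F y \<in> carrier (S[X])" by (rule Fc)+
  define D where "D = F x \<ominus>\<^bsub>S[X]\<^esub> F y"
  have Dc: "D \<in> carrier (S[X])" unfolding D_def using Fxc by simp
  define E where "E = Fu \<ominus>\<^bsub>S[X]\<^esub> Fv"
  have EGD: "E = G \<otimes>\<^bsub>S[X]\<^esub> D" unfolding E_def D_def Fu_eq Fv_eq using Gc Fxc by algebra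
  have Fuc: "Fu \<in> carrier (S[X])" "Fv \<in> carrier (S[X])" unfolding Fu_def Fv_def by (rule Fc)+
  have degFu: "degree Fu = n" "degree Fv = n"
    using F_monic[of "\<lambda>i. u!i"] F_monic[of "\<lambda>i. v!i"] lu lv
    by (simp_all add: Fu_def Fv_def sum_list_sum_nth atLeast0LessThan)
  have leadFu: "Fu \<noteq> [] \<and> lead_coeff Fu = \<one>" "Fv \<noteq> [] \<and> lead_coeff Fv = \<one>"
    using F_monic unfolding Fu_def Fv_def by auto
  have sFu: "set Fu \<subseteq> carrier R" "set Fv \<subseteq> carrier R"
    using Fuc polynomial_in_carrier[OF S] by (auto simp: univ_poly_carrier[symmetric])
  have key: "t + (\<delta> - 1) \<le> n" if nz: "coeff E t \<noteq> \<zero>" for t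
  proof (rule ccontr)
    assume "\<not> t + (\<delta> - 1) \<le> n"
    have ce: "coeff E t = coeff Fu t \<ominus> coeff Fv t" unfolding E_def by (rule coeff_minus[OF Fuc])
    have cc: "coeff Fu t \<in> carrier R" "coeff Fv t \<in> carrier R" using sFu by auto
    have "coeff Fu t = coeff Fv t"
    proof (cases "n < t")
      case True
      then show ?thesis using coeff_degree degFu by simp
    next
      case False
      show ?thesis
      proof (cases "t = n")
        case True
        then show ?thesis using lead_coeff_simp leadFu degFu by metis
      next
        case False
        hence "n - t \<in> {1..<\<delta>-1}" "n - (n - t) = t" using \<open>\<not> n < t\<close> \<open>\<not> t + (\<delta> - 1) \<le> n\<close> by auto
        thus ?thesis using co[of "n - t"] unfolding Fu_def Fv_def by simp
      qed
    qed
    hence "coeff E t = \<zero>" using ce cc by simp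
    thus False using nz by simp
  qed
  show False
  proof (cases "D = \<zero>\<^bsub>S[X]\<^esub>")
    case True
    hence Fxy: "F x = F y" unfolding D_def using Fxc by simp
    have "\<exists>i<q. x i \<noteq> y i"
    proof (rule ccontr)
      assume "\<not> (\<exists>i<q. x i \<noteq> y i)"
      hence "\<And>i. i < q \<Longrightarrow> u!i = v!i" by (metis ux vy)
      hence "u = v" using lu lv by (intro nth_equalityI) auto
      thus False using uv by simp
    qed
    then obtain i where i: "i < q" "x i \<noteq> y i" by blast
    show False
    proof (cases "x i > 0")
      case True
      hence "y i = 0" by (auto simp: x_def y_def m_def)
      thus False using F_root[of i x y] i True Fxy by simp
    next
      case False
      hence "x i = 0" "y i > 0" using i by auto
      thus False using F_root[of i y x] i Fxy by simp
    qed
  next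
    case False
    have Gne: "G \<noteq> \<zero>\<^bsub>S[X]\<^esub>" using F_monic unfolding G_def by (simp add: univ_poly_zero)
    have Ene: "E \<noteq> []" using U.integral[OF _ Gc Dc] Gne False EGD by (auto simp: univ_poly_zero)
    have pG: "polynomial S G" "polynomial S D" using Gc Dc by (simp_all add: univ_poly_carrier)
    have Dne: "D \<noteq> []" using False by (simp add: univ_poly_zero)
    have Gne': "G \<noteq> []" using Gne by (simp add: univ_poly_zero)
    have degE: "degree E = degree G + degree D"
      using poly_mult_degree_eq[OF S pG] Dne Gne' EGD by (simp add: univ_poly_mult)
    have Ec: "E \<in> carrier (S[X])" using EGD Gc Dc by simp
    have "lead_coeff E \<noteq> \<zero>" using Ec Ene by (simp add: univ_poly_carrier[symmetric] polynomial_def)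
    hence "coeff E (degree E) \<noteq> \<zero>" using lead_coeff_simp Ene by simp
    hence b: "degree G + degree D + (\<delta> - 1) \<le> n" using key degE by simp
    have degG: "degree G = n - w" using F_monic su w_def unfolding G_def by simp
    have "w \<le> n" using su w_def by simp
    hence dD: "degree D = 0" using b degG wd by linarith
    then obtain dd where Dd: "D = [dd]" using Dne by (cases D) auto
    have ddnz: "dd \<noteq> \<zero>" and ddc: "dd \<in> carrier R"
      using pG(2) Dd subringE(1)[OF S] by (auto simp: polynomial_def)
    have cvc: "const_term Fv \<in> carrier R"
      using const_term_simprules_shell(1)[OF S Fuc(2)] subringE(1)[OF S] by auto
    have "const_term E = const_term Fu \<ominus> const_term Fv" unfolding E_def by (rule const_minus[OF Fuc])
    also have "\<dots> = \<zero>" using ct cvc unfolding Fu_def Fv_def by (simp add: a_minus_def r_neg)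
    finally have "const_term E = \<zero>" .
    moreover have "const_term E = const_term G \<otimes> const_term D"
      unfolding EGD by (rule const_term_simprules_shell(2)[OF S Gc Dc])
    moreover have "const_term D = dd" using ddc by (simp add: Dd const_term_def)
    moreover have "const_term G \<noteq> \<zero>" unfolding G_def by (rule const_F)
    moreover have "const_term G \<in> carrier R"
      using const_term_simprules_shell(1)[OF S Gc] subringE(1)[OF S] by auto
    ultimately show False using integral[of "const_term G" dd] ddc ddnz by auto
  qed
qed

end

lemma finite_J: "finite (J q n)"
proof -
  have "J q n \<subseteq> {xs. set xs \<subseteq> {0..n} \<and> length xs = q}"
    by (auto simp: J_def member_le_sum_list)
  moreover have "finite {xs. set xs \<subseteq> {0..n::nat} \<and> length xs = q}"
    by (rule finite_lists_length_eq) simp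
  ultimately show ?thesis by (rule finite_subset)
qed

lemma (in domain) code_exists:
  assumes S: "subring S R" and fS: "finite S" and cS: "card S = r" and qr: "q < r" and d: "\<delta> \<ge> 2"
  shows "\<exists>A \<subseteq> J q n. card (J q n) \<le> r ^ (\<delta> - 2) * (r - 1) * card A \<and>
           (\<forall>u\<in>A. \<forall>v\<in>A. u \<noteq> v \<longrightarrow> 2 * \<delta> \<le> dL u v)"
proof -
  have z: "\<zero> \<in> S" using subringE(2) S by blast
  have o: "\<one> \<in> S" using subringE(3) S by blast
  have cS0: "card (S - {\<zero>}) = r - 1" using z fS cS by simp
  have "card {..<q} \<le> card (S - {\<zero>})" using cS0 qr by simp
  then obtain \<alpha> where \<alpha>: "\<alpha> ` {..<q} \<subseteq> S - {\<zero>}" "inj_on \<alpha> {..<q}"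
    using card_le_inj[of "{..<q}" "S - {\<zero>}"] fS by auto
  have cs: "codesetup R S \<alpha> q"
    unfolding codesetup_def codesetup_axioms_def using domain_axioms S \<alpha> by auto
  interpret C: codesetup R S \<alpha> q by (rule cs)
  define Phi where "Phi u = (map (\<lambda>j. coeff (C.F (\<lambda>i. u!i)) (n - j)) [1..<\<delta>-1], const_term (C.F (\<lambda>i. u!i)))" for u
  define Cl where "Cl = {l. set l \<subseteq> S \<and> length l = \<delta> - 2} \<times> (S - {\<zero>})"
  have fCl: "finite Cl" unfolding Cl_def using fS by (intro finite_cartesian_product finite_lists_length_eq) auto
  have cCl: "card Cl = r ^ (\<delta> - 2) * (r - 1)"
    unfolding Cl_def card_cartesian_product using card_lists_length_eq[OF fS] cS cS0 by simp
  have neCl: "Cl \<noteq> {}"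
  proof -
    have "(replicate (\<delta> - 2) \<zero>, \<one>) \<in> Cl" unfolding Cl_def using z o by auto
    thus ?thesis by auto
  qed
  have im: "Phi ` J q n \<subseteq> Cl"
  proof
    fix c assume "c \<in> Phi ` J q n"
    then obtain u where c: "c = Phi u" by auto
    have Fc: "C.F (\<lambda>i. u!i) \<in> carrier (S[X])" by (rule C.Fc)
    hence sF: "set (C.F (\<lambda>i. u!i)) \<subseteq> S" by (auto simp: univ_poly_carrier[symmetric] polynomial_def)
    have "const_term (C.F (\<lambda>i. u!i)) \<in> S" using const_term_simprules_shell(1)[OF S Fc] .
    moreover have "const_term (C.F (\<lambda>i. u!i)) \<noteq> \<zero>" by (rule C.const_F)
    moreover have "coeff (C.F (\<lambda>i. u!i)) j \<in> S" for j using coeff_in_sub[OF sF z] .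
    ultimately show "c \<in> Cl" unfolding c Phi_def Cl_def using d by auto
  qed
  obtain b where b: "b \<in> Cl" and cb: "card (J q n) \<le> card Cl * card {u \<in> J q n. Phi u = b}"
    using pigeon[OF finite_J fCl neCl im] by blast
  define A where "A = {u \<in> J q n. Phi u = b}"
  have "\<forall>u\<in>A. \<forall>v\<in>A. u \<noteq> v \<longrightarrow> 2 * \<delta> \<le> dL u v"
  proof (intro ballI impI)
    fix u v assume u: "u \<in> A" and v: "v \<in> A" and uv: "u \<noteq> v"
    have eq: "Phi u = Phi v" using u v unfolding A_def by simp
    show "2 * \<delta> \<le> dL u v"
    proof (rule C.dist_main)
      show "u \<in> J q n" "v \<in> J q n" using u v unfolding A_def by auto
      show "u \<noteq> v" "2 \<le> \<delta>" by fact+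
      show "coeff (C.F (\<lambda>i. u!i)) (n - j) = coeff (C.F (\<lambda>i. v!i)) (n - j)" if "j \<in> {1..<\<delta>-1}" for j
        using eq that unfolding Phi_def by auto
      show "const_term (C.F (\<lambda>i. u!i)) = const_term (C.F (\<lambda>i. v!i))"
        using eq unfolding Phi_def by auto
    qed
  qed
  moreover have "A \<subseteq> J q n" unfolding A_def by auto
  moreover have "card (J q n) \<le> r ^ (\<delta> - 2) * (r - 1) * card A" using cb cCl unfolding A_def by simp
  ultimately show ?thesis by blast
qed

theorem lemma4p3:
  fixes q n \<delta> r :: nat
  assumes "q \<ge> 2" and "n \<ge> 1" and "\<delta> \<ge> 2"
    and "primepow r" and "r > q"
  shows "\<exists>A. A \<subseteq> J q n \<and>
     real (card A) \<ge> real ((n + q - 1) choose n) / (real r ^ (\<delta> - 2) * (real r - 1)) \<and>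
     (\<forall>u\<in>A. \<forall>v\<in>A. u \<noteq> v \<longrightarrow> dL u v \<ge> 2 * \<delta>)"
proof -
  obtain p k where p: "normalization_semidom_class.prime p" and k: "k > 0" and r: "r = p ^ k"
    using assms(4) unfolding primepow_def by blast
  obtain L :: "((int list \<times> nat) multiset \<Rightarrow> int) ring" and S
    where fL: "field L" and S: "subring S L" and cS: "card S = p ^ k"
    using GF_exists[OF p, of k] k by auto
  have dL: "domain L" using fL by (rule field.axioms(1))
  have r1: "r \<ge> 1" using assms(5) by simp
  have fS: "finite S" using cS r r1 by (metis card_ge_0_finite not_one_le_zero zero_less_iff_neq_zero)
  obtain A where A: "A \<subseteq> J q n" and cA: "card (J q n) \<le> r ^ (\<delta> - 2) * (r - 1) * card A"
    and dA: "\<forall>u\<in>A. \<forall>v\<in>A. u \<noteq> v \<longrightarrow> 2 * \<delta> \<le> dL u v"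
    using domain.code_exists[OF dL S fS, of r q \<delta> n] cS r assms(3,5) by auto
  have cJ: "card (J q n) = (n + q - 1) choose n"
    unfolding J_def using card_length_sum_list[of q n] by simp
  have r2: "real r > 1" using assms(1,5) by simp
  have pos: "real r ^ (\<delta> - 2) * (real r - 1) > 0" using r2 by (intro mult_pos_pos) auto
  have "real (card (J q n)) \<le> real (r ^ (\<delta> - 2) * (r - 1) * card A)" using cA by linarith
  also have "\<dots> = (real r ^ (\<delta> - 2) * (real r - 1)) * real (card A)" using r1 by (simp add: of_nat_diff)
  finally have "real ((n + q - 1) choose n) / (real r ^ (\<delta> - 2) * (real r - 1)) \<le> real (card A)"
    using pos cJ by (simp add: divide_le_eq mult.commute)
  thus ?thesis using A dA by auto
qed

end
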